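(* Let $P=P(G,[\omega])$ be a toric poset over $G=(V,E)$ and $I\subseteq V$. The following are equivalent: (i) $I$ is a toric filter of $P$; (ii) $I$ is an order ideal of $P(G,\omega')$ for some $\omega'\in[\omega]$; (iii) $I$ is an order filter of $P(G,\omega'')$ for some $\omega''\in[\omega]$; (iv) in at least one total toric extension of $P$, the elements of $I$ appear in consecutive cyclic order.
   Context: Toric poset setup: $V=[n]$; $\mathrm{Acyc}(G)$ acyclic orientations; $P(G,\omega)$ the poset given by the transitive closure of $\omega$; $[\omega]$ the class under the equivalence generated by converting a source into a sink; toric chambers (components of $\mathbb{R}^V/\mathbb{Z}^V$ minus the hyperplanes $\{x_i\equiv x_j\bmod1\}$, $\{i,j\}\in E$) correspond bijectively to classes $[\omega]$; $P(G,[\omega])$ is identified with its chamber $c(P)$. For a partition $\pi$, $D^{\mathrm{tor}}_\pi$ is the image in the torus of $\{x\in\mathbb{R}^V: x_i=x_j$ for $i,j$ in a common block$\}$. Toric filter: $I\subseteq V$ is a toric filter of $P$ if $I=\emptyset$, $I=V$, or $\emptyset\ne I\ne V$ and $\overline{c(P)}\cap D^{\mathrm{tor}}_{\{I,V\setminus I\}}$ is two-dimensional (equivalently, the partition $\{I,V\setminus I\}$ is closed w.r.t. $P$, i.e. it is the coarsest partition giving that intersection; this is the preimage structure of a toric morphism onto a two-element toric poset). An order ideal of a poset is a down-closed subset; an order filter an up-closed subset. A total toric extension of $P$ is a chamber $c(P')\subseteq c(P)$ of the toric arrangement of the complete graph $K_V$; these are indexed by cyclic classes $[(w_1,\dots,w_n)]$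 of permutations of $V$ (the set where $0\le x_{w_1}<\dots<x_{w_n}<1$ up to cyclic shift). *)

theory Defs
  imports "HOL-Analysis.Analysis"
begin

text \<open>Vertex set V = UNIV of a finite type 'a (V = [n] up to renaming, n = CARD('a)). Points of R^V are vectors real^'a;
  subsets of the torus R^V/Z^V are represented by their (Z^V-invariant) preimages in R^V.\<close>

definition simple_graph :: "'a set set \<Rightarrow> bool" where
  "simple_graph E \<longleftrightarrow> (\<forall>e\<in>E. card e = 2)"

text \<open>An orientation: (i,j) \<in> \<omega> means the edge {i,j} is directed i \<rightarrow> j, i.e. i < j in P(G,\<omega>).\<close>
definition orientation :: "'a set set \<Rightarrow> ('a \<times> 'a) set \<Rightarrow> bool" where
  "orientation E \<omega> \<longleftrightarrow> \<omega> \<subseteq> {(i,j). {i,j} \<in> E} \<and>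
     (\<forall>i j. {i,j} \<in> E \<longrightarrow> ((i,j) \<in> \<omega> \<longleftrightarrow> (j,i) \<notin> \<omega>))"

definition Acyc :: "'a set set \<Rightarrow> ('a \<times> 'a) set set" where
  "Acyc E = {\<omega>. orientation E \<omega> \<and> acyclic \<omega>}"

definition is_source :: "('a \<times> 'a) set \<Rightarrow> 'a \<Rightarrow> bool" where
  "is_source \<omega> i \<longleftrightarrow> (\<forall>j. (j,i) \<notin> \<omega>)"

definition flip_at :: "('a \<times> 'a) set \<Rightarrow> 'a \<Rightarrow> ('a \<times> 'a) set" where
  "flip_at \<omega> i = {(a,b) \<in> \<omega>. a \<noteq> i \<and> b \<noteq> i} \<union> {(b,a) | a b. (a,b) \<in> \<omega> \<and> (a = i \<or> b = i)}"

definition flip_rel :: "'a set set \<Rightarrow> (('a \<times> 'a) set \<times> ('a \<times> 'a) set) set" where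
  "flip_rel E = {(\<omega>, flip_at \<omega> i) | \<omega> i. \<omega> \<in> Acyc E \<and> is_source \<omega> i}"

definition toric_class :: "'a set set \<Rightarrow> ('a \<times> 'a) set \<Rightarrow> ('a \<times> 'a) set set" where
  "toric_class E \<omega> = {\<omega>'. (\<omega>, \<omega>') \<in> (flip_rel E \<union> (flip_rel E)\<inverse>)\<^sup>*}"

definition order_ideal :: "('a \<times> 'a) set \<Rightarrow> 'a set \<Rightarrow> bool" where
  "order_ideal \<omega> I \<longleftrightarrow> (\<forall>a b. (a,b) \<in> \<omega>\<^sup>+ \<longrightarrow> b \<in> I \<longrightarrow> a \<in> I)"

definition order_filter :: "('a \<times> 'a) set \<Rightarrow> 'a set \<Rightarrow> bool" where
  "order_filter \<omega> I \<longleftrightarrow> (\<forall>a b. (a,b) \<in> \<omega>\<^sup>+ \<longrightarrow> a \<in> I \<longrightarrow> b \<in> I)"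

text \<open>Toric arrangement of G: hyperplanes x_i \<equiv> x_j mod 1. For a point off the arrangement,
  its orientation is read off from the representative in [0,1)^V (fractional parts).\<close>
definition off_arrangement :: "'a set set \<Rightarrow> real^'a \<Rightarrow> bool" where
  "off_arrangement E x \<longleftrightarrow> (\<forall>i j. {i,j} \<in> E \<longrightarrow> frac (x$i) \<noteq> frac (x$j))"

definition orient_of :: "'a set set \<Rightarrow> real^'a \<Rightarrow> ('a \<times> 'a) set" where
  "orient_of E x = {(i,j). {i,j} \<in> E \<and> frac (x$i) < frac (x$j)}"

definition toric_chamber :: "'a set set \<Rightarrow> ('a \<times> 'a) set \<Rightarrow> (real^'a) set" where
  "toric_chamber E \<omega> = {x. off_arrangement E x \<and> orient_of E x \<in> toric_class E \<omega>}"

definition D_tor :: "'a set set \<Rightarrow> (real^'a) set" where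
  "D_tor \<pi> = {x. \<forall>B\<in>\<pi>. \<forall>i\<in>B. \<forall>j\<in>B. x$i - x$j \<in> \<int>}"

text \<open>Toric filter. Since D^tor_{I,V-I} is (locally) a 2-dimensional flat, the intersection
  with the closed chamber is two-dimensional iff it contains a nonempty relatively open piece of it.\<close>
definition toric_filter :: "('a::finite) set set \<Rightarrow> ('a \<times> 'a) set \<Rightarrow> 'a set \<Rightarrow> bool" where
  "toric_filter E \<omega> I \<longleftrightarrow> I = {} \<or> I = UNIV \<or>
     (I \<noteq> {} \<and> I \<noteq> UNIV \<and>
      (\<exists>U. open U \<and> U \<inter> D_tor {I, -I} \<noteq> {} \<and>
           U \<inter> D_tor {I, -I} \<subseteq> closure (toric_chamber E \<omega>)))"

definition complete_graph :: "'a set set" where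
  "complete_graph = {{i,j} | i j. i \<noteq> j}"

definition lin_orient :: "'a list \<Rightarrow> ('a \<times> 'a) set" where
  "lin_orient w = {(w!a, w!b) | a b. a < b \<and> b < length w}"

definition cyclically_consecutive :: "'a list \<Rightarrow> 'a set \<Rightarrow> bool" where
  "cyclically_consecutive w I \<longleftrightarrow> (\<exists>k. set (take (card I) (rotate k w)) = I)"

definition total_toric_extension :: "('a::finite) set set \<Rightarrow> ('a \<times> 'a) set \<Rightarrow> 'a list \<Rightarrow> bool" where
  "total_toric_extension E \<omega> w \<longleftrightarrow> distinct w \<and> set w = UNIV \<and>
     toric_chamber complete_graph (lin_orient w) \<subseteq> toric_chamber E \<omega>"

end

theory Submission
  imports Defs
begin

definition edge_ideal :: "('a \<times> 'a) set \<Rightarrow> 'a set \<Rightarrow> bool" where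
  "edge_ideal r J \<longleftrightarrow> (\<forall>a b. (a,b) \<in> r \<longrightarrow> b \<in> J \<longrightarrow> a \<in> J)"

lemma order_ideal_iff: "order_ideal r J \<longleftrightarrow> edge_ideal r J"
proof
  assume "order_ideal r J" then show "edge_ideal r J"
    unfolding order_ideal_def edge_ideal_def by blast
next
  assume e: "edge_ideal r J"
  show "order_ideal r J" unfolding order_ideal_def
  proof (intro allI impI)
    fix a b assume "(a,b) \<in> r\<^sup>+" "b \<in> J"
    then show "a \<in> J"
      by (induction rule: converse_trancl_induct) (use e in \<open>auto simp: edge_ideal_def\<close>)
  qed
qed

lemma order_filter_iff: "order_filter r J \<longleftrightarrow> edge_ideal r (-J)"
proof
  assume "order_filter r J" then show "edge_ideal r (-J)"
    unfolding order_filter_def edge_ideal_def by blast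
next
  assume e: "edge_ideal r (-J)"
  show "order_filter r J" unfolding order_filter_def
  proof (intro allI impI)
    fix a b assume "(a,b) \<in> r\<^sup>+" "a \<in> J"
    then show "b \<in> J"
      by (induction rule: trancl_induct) (use e in \<open>auto simp: edge_ideal_def\<close>)
  qed
qed

lemma orientation_no_loop: "orientation E r \<Longrightarrow> {i,i} \<notin> E"
  unfolding orientation_def by blast

lemma flip_at_orient:
  assumes o: "orientation E r"
  shows "orientation E (flip_at r m)"
proof -
  have mem: "(a,b) \<in> flip_at r m \<longleftrightarrow> (if a = m \<or> b = m then (b,a) \<in> r else (a,b) \<in> r)" for a b
    unfolding flip_at_def by auto
  have o1: "\<And>a b. (a,b) \<in> r \<Longrightarrow> {a,b} \<in> E" and o2: "\<And>i j. {i,j} \<in> E \<Longrightarrow> ((i,j) \<in> r \<longleftrightarrow> (j,i) \<notin> r)"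
    using o unfolding orientation_def by blast+
  have sw: "{a,b} = {b,a}" for a b :: 'a by blast
  show ?thesis
    unfolding orientation_def
  proof (intro conjI allI impI subsetI)
    fix p assume "p \<in> flip_at r m"
    then obtain a b where p: "p = (a,b)" "(a,b) \<in> flip_at r m" by (cases p) auto
    show "p \<in> {(i,j). {i,j} \<in> E}"
    proof (cases "a = m \<or> b = m")
      case True
      then have "(b,a) \<in> r" using p mem by metis
      then show ?thesis using o1 sw p(1) by fastforce
    next
      case False
      then have "(a,b) \<in> r" using p mem by metis
      then show ?thesis using o1 p(1) by fastforce
    qed
  next
    fix i j assume e: "{i,j} \<in> E"
    have e': "{j,i} \<in> E" using e sw by metis
    show "((i,j) \<in> flip_at r m) = ((j,i) \<notin> flip_at r m)"
    proof (cases "i = m \<or> j = m")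
      case True
      then show ?thesis using o2[OF e] mem[of i j] mem[of j i] by metis
    next
      case False
      then show ?thesis using o2[OF e] mem[of i j] mem[of j i] by metis
    qed
  qed
qed

lemma flip_at_Acyc:
  assumes "r \<in> Acyc E" "is_source r m"
  shows "flip_at r m \<in> Acyc E"
proof -
  have o: "orientation E r" and ac: "acyclic r" using assms by (auto simp: Acyc_def)
  have mem: "(a,b) \<in> flip_at r m \<longleftrightarrow> (if a = m \<or> b = m then (b,a) \<in> r else (a,b) \<in> r)" for a b
    unfolding flip_at_def by auto
  have "orientation E (flip_at r m)" by (rule flip_at_orient[OF o])
  moreover have "acyclic (flip_at r m)"
  proof -
    let ?f = "flip_at r m"
    have nout: "(m,b) \<notin> ?f" for b using assms(2) mem[of m b] unfolding is_source_def by auto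
    have sub: "(x,y) \<in> r\<^sup>+ \<or> y = m" if "(x,y) \<in> ?f\<^sup>+" for x y
      using that
    proof (induction rule: trancl_induct)
      case (base y) then show ?case using mem[of x y] nout[of y] by (cases "x = m \<or> y = m") auto
    next
      case (step y z)
      have "y \<noteq> m" using step(2) nout by blast
      then have "(x,y) \<in> r\<^sup>+" using step.IH by blast
      moreover have "(y,z) \<in> r \<or> z = m" using step(2) \<open>y \<noteq> m\<close> mem[of y z] by auto
      ultimately show ?case by (blast intro: trancl_into_trancl)
    qed
    show ?thesis unfolding acyclic_def
    proof (intro allI notI)
      fix x assume "(x,x) \<in> ?f\<^sup>+"
      moreover have "x \<noteq> m"
      proof
        assume "x = m"
        with \<open>(x,x) \<in> ?f\<^sup>+\<close> obtain c where "(m,c) \<in> ?f"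
          by (blast elim: converse_tranclE)
        with nout show False by auto
      qed
      ultimately show False using sub ac unfolding acyclic_def by blast
    qed
  qed
  ultimately show ?thesis by (simp add: Acyc_def)
qed

lemma flip_relD0: "(x,y) \<in> flip_rel E \<Longrightarrow> \<exists>i. y = flip_at x i \<and> x \<in> Acyc E \<and> is_source x i"
  unfolding flip_rel_def by blast

lemma flip_relD: "(x,y) \<in> flip_rel E \<Longrightarrow> x \<in> Acyc E \<and> y \<in> Acyc E"
  using flip_relD0 flip_at_Acyc by metis

lemma class_Acyc:
  assumes "r \<in> Acyc E" "r' \<in> toric_class E r"
  shows "r' \<in> Acyc E"
proof -
  have "(r, r') \<in> (flip_rel E \<union> (flip_rel E)\<inverse>)\<^sup>*" using assms(2) unfolding toric_class_def by (rule CollectD)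
  then show ?thesis
  proof (induction rule: rtrancl_induct)
    case base then show ?case using assms(1) .
  next
    case (step y z)
    then have "(y,z) \<in> flip_rel E \<or> (z,y) \<in> flip_rel E" by blast
    then show ?case using flip_relD by metis
  qed
qed

lemma class_refl: "r \<in> toric_class E r" by (simp add: toric_class_def)

lemma class_trans: "r' \<in> toric_class E r \<Longrightarrow> r'' \<in> toric_class E r' \<Longrightarrow> r'' \<in> toric_class E r"
  unfolding toric_class_def using rtrancl_trans[of r r' _ r''] by simp

definition rev_cut :: "('a \<times> 'a) set \<Rightarrow> 'a set \<Rightarrow> ('a \<times> 'a) set" where
  "rev_cut r J = {(a,b) \<in> r. (a \<in> J) = (b \<in> J)} \<union> {(b,a) | a b. (a,b) \<in> r \<and> (a \<in> J) \<noteq> (b \<in> J)}"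

lemma acyc_antisym: "acyclic r \<Longrightarrow> (a,b) \<in> r \<Longrightarrow> (b,a) \<notin> r"
  unfolding acyclic_def by (meson r_into_trancl trancl_trans)

lemma acyc_irrefl: "acyclic r \<Longrightarrow> (a,a) \<notin> r"
  unfolding acyclic_def by blast

lemma rev_cut_mem: "(a,b) \<in> rev_cut r J \<longleftrightarrow> (if (a \<in> J) = (b \<in> J) then (a,b) \<in> r else (b,a) \<in> r)"
  unfolding rev_cut_def by auto

lemma flip_at_mem: "(a,b) \<in> flip_at r m \<longleftrightarrow> (if a = m \<or> b = m then (b,a) \<in> r else (a,b) \<in> r)"
  unfolding flip_at_def by auto

lemma rev_cut_class:
  fixes r :: "('a::finite \<times> 'a) set"
  assumes "r \<in> Acyc E" "edge_ideal r J"
  shows "rev_cut r J \<in> toric_class E r"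
  using assms
proof (induction "card J" arbitrary: r J)
  case 0
  then have "J = {}" by simp
  then have "rev_cut r J = r" unfolding rev_cut_def by simp
  then show ?case by (simp add: class_refl)
next
  case (Suc n)
  have ac: "acyclic r" using Suc.prems by (simp add: Acyc_def)
  have "wf r" using ac by (simp add: finite_acyclic_wf)
  have "J \<noteq> {}" using Suc.hyps(2) by auto
  then obtain m where mJ: "m \<in> J" and mmin: "\<And>a. (a,m) \<in> r \<Longrightarrow> a \<notin> J"
    using wfE_min[OF \<open>wf r\<close>, of _ J] by blast
  have src: "is_source r m" unfolding is_source_def
  proof (intro allI notI)
    fix j assume "(j,m) \<in> r"
    then show False using mmin[of j] Suc.prems(2) mJ unfolding edge_ideal_def by blast
  qed
  let ?r1 = "flip_at r m"
  have r1: "?r1 \<in> Acyc E" by (rule flip_at_Acyc[OF Suc.prems(1) src])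
  have step: "(r, ?r1) \<in> flip_rel E" using Suc.prems(1) src unfolding flip_rel_def by blast
  have "edge_ideal ?r1 (J - {m})" unfolding edge_ideal_def
  proof (intro allI impI)
    fix a b assume ab: "(a,b) \<in> ?r1" "b \<in> J - {m}"
    show "a \<in> J - {m}"
    proof (cases "a = m")
      case True
      then have "(b,a) \<in> r" using ab flip_at_mem[of a b r m] by auto
      then show ?thesis using src True unfolding is_source_def by blast
    next
      case False
      then have "(a,b) \<in> r" using ab flip_at_mem[of a b r m] by auto
      then show ?thesis using Suc.prems(2) ab(2) False unfolding edge_ideal_def by blast
    qed
  qed
  moreover have "card (J - {m}) = n" using Suc.hyps(2) mJ by simp
  ultimately have ih: "rev_cut ?r1 (J - {m}) \<in> toric_class E ?r1"
    using Suc.hyps(1)[of "J - {m}" ?r1] r1 by blast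
  have eq: "rev_cut ?r1 (J - {m}) = rev_cut r J"
  proof (rule set_eqI)
    fix p :: "'a \<times> 'a"
    obtain a b where p: "p = (a,b)" by (cases p)
    have x1: "(a,b) \<notin> r \<or> (b,a) \<notin> r" using acyc_antisym[OF ac] by blast
    have x2: "(m,m) \<notin> r" using acyc_irrefl[OF ac] by blast
    show "p \<in> rev_cut ?r1 (J - {m}) \<longleftrightarrow> p \<in> rev_cut r J"
      unfolding p rev_cut_mem flip_at_mem using mJ x1 x2 by auto
  qed
  have "?r1 \<in> toric_class E r" using step unfolding toric_class_def by blast
  then show ?case using ih eq class_trans by metis
qed

lemma ideal_to_filter:
  fixes r :: "('a::finite \<times> 'a) set"
  assumes "r \<in> Acyc E" "order_ideal r I"
  shows "\<exists>r'\<in>toric_class E r. order_filter r' I"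
proof -
  have ac: "acyclic r" using assms by (simp add: Acyc_def)
  have e: "edge_ideal r I" using assms order_ideal_iff by blast
  have "order_filter (rev_cut r I) I"
    unfolding order_filter_iff using e acyc_irrefl[OF ac]
    unfolding edge_ideal_def rev_cut_def by auto
  then show ?thesis using rev_cut_class[OF assms(1) e] by blast
qed

lemma filter_to_ideal:
  fixes r :: "('a::finite \<times> 'a) set"
  assumes "r \<in> Acyc E" "order_filter r I"
  shows "\<exists>r'\<in>toric_class E r. order_ideal r' I"
proof -
  have ac: "acyclic r" using assms by (simp add: Acyc_def)
  have e: "edge_ideal r (-I)" using assms order_filter_iff by blast
  have "order_ideal (rev_cut r (-I)) I"
    unfolding order_ideal_iff using e acyc_irrefl[OF ac]
    unfolding edge_ideal_def rev_cut_def by auto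
  then show ?thesis using rev_cut_class[OF assms(1) e] by blast
qed

definition pos :: "'a list \<Rightarrow> 'a \<Rightarrow> nat" where
  "pos l x = (THE a. a < length l \<and> l!a = x)"

lemma pos_nth: "distinct l \<Longrightarrow> a < length l \<Longrightarrow> pos l (l!a) = a"
  unfolding pos_def by (rule the_equality) (auto simp: nth_eq_iff_index_eq)

lemma pos_in: "distinct l \<Longrightarrow> x \<in> set l \<Longrightarrow> pos l x < length l \<and> l!(pos l x) = x"
  by (metis in_set_conv_nth pos_nth)

lemma lin_char: "distinct l \<Longrightarrow> (x,y) \<in> lin_orient l \<longleftrightarrow> x \<in> set l \<and> y \<in> set l \<and> pos l x < pos l y"
proof
  assume d: "distinct l" and "(x,y) \<in> lin_orient l"
  then obtain a b where "x = l!a" "y = l!b" "a < b" "b < length l" unfolding lin_orient_def by blast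
  then show "x \<in> set l \<and> y \<in> set l \<and> pos l x < pos l y" using d pos_nth[OF d, of a] pos_nth[OF d, of b] by auto
next
  assume d: "distinct l" and h: "x \<in> set l \<and> y \<in> set l \<and> pos l x < pos l y"
  then show "(x,y) \<in> lin_orient l" unfolding lin_orient_def using pos_in[OF d]
    by (metis (mono_tags, lifting) mem_Collect_eq)
qed

lemma lin_cons: "lin_orient (x#xs) = {(x,y)|y. y \<in> set xs} \<union> lin_orient xs"
proof (rule set_eqI)
  fix p :: "'a \<times> 'a"
  show "p \<in> lin_orient (x#xs) \<longleftrightarrow> p \<in> {(x,y)|y. y \<in> set xs} \<union> lin_orient xs"
  proof
    assume "p \<in> lin_orient (x#xs)"
    then obtain a b where p: "p = ((x#xs)!a, (x#xs)!b)" "a < b" "b < Suc (length xs)"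
      unfolding lin_orient_def by auto
    then obtain b' where b: "b = Suc b'" by (cases b) auto
    show "p \<in> {(x,y)|y. y \<in> set xs} \<union> lin_orient xs"
    proof (cases a)
      case 0 then show ?thesis using p b by auto
    next
      case (Suc a')
      then have "(xs!a', xs!b') \<in> lin_orient xs" using p b unfolding lin_orient_def by auto
      then show ?thesis using p b Suc by auto
    qed
  next
    assume "p \<in> {(x,y)|y. y \<in> set xs} \<union> lin_orient xs"
    then consider y where "p = (x,y)" "y \<in> set xs" | "p \<in> lin_orient xs" by blast
    then show "p \<in> lin_orient (x#xs)"
    proof cases
      case 1
      then obtain b where "b < length xs" "xs!b = y" by (auto simp: in_set_conv_nth)
      then have "p = ((x#xs)!0, (x#xs)!Suc b) \<and> 0 < Suc b \<and> Suc b < length (x#xs)" using 1 by auto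
      then show ?thesis unfolding lin_orient_def by blast
    next
      case 2
      then obtain a b where "p = (xs!a, xs!b)" "a < b" "b < length xs" unfolding lin_orient_def by blast
      then have "p = ((x#xs)!Suc a, (x#xs)!Suc b) \<and> Suc a < Suc b \<and> Suc b < length (x#xs)" by auto
      then show ?thesis unfolding lin_orient_def by blast
    qed
  qed
qed

lemma lin_nil: "lin_orient [] = {}" unfolding lin_orient_def by auto

lemma lin_append: "lin_orient (xs @ ys) = lin_orient xs \<union> lin_orient ys \<union> set xs \<times> set ys"
  by (induction xs) (auto simp: lin_cons lin_nil)

lemma lin_sub: "lin_orient l \<subseteq> set l \<times> set l"
  unfolding lin_orient_def by auto

lemma lin_acyclic: "distinct l \<Longrightarrow> acyclic (lin_orient l)"
proof -
  assume d: "distinct l"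
  have "lin_orient l \<subseteq> inv_image less_than (pos l)"
    using lin_char[OF d] by auto
  moreover have "wf (inv_image less_than (pos l))" by simp
  ultimately show ?thesis using wf_subset wf_acyclic by blast
qed

lemma complete_graph_mem: "{i,j} \<in> complete_graph \<longleftrightarrow> i \<noteq> j"
  unfolding complete_graph_def by (auto simp: doubleton_eq_iff)

lemma lin_Acyc_K:
  assumes d: "distinct l" and s: "set l = UNIV"
  shows "lin_orient l \<in> Acyc complete_graph"
proof -
  have "orientation complete_graph (lin_orient l)"
    unfolding orientation_def
  proof (intro conjI allI impI subsetI)
    fix p assume "p \<in> lin_orient l"
    then show "p \<in> {(i,j). {i,j} \<in> complete_graph}"
    proof -
      obtain a b where p: "p = (a,b)" by (cases p)
      then have "a \<noteq> b" using lin_char[OF d] \<open>p \<in> lin_orient l\<close> by auto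
      then show ?thesis using p complete_graph_mem[of a b] by simp
    qed
  next
    fix i j :: 'a assume "{i,j} \<in> complete_graph"
    then have "i \<noteq> j" by (simp add: complete_graph_mem)
    moreover have "l!(pos l i) = i" "l!(pos l j) = j" using pos_in[OF d] s by auto
    moreover have "pos l i \<noteq> pos l j" using calculation by metis
    ultimately show "((i,j) \<in> lin_orient l) = ((j,i) \<notin> lin_orient l)"
      using lin_char[OF d] s by auto
  qed
  then show ?thesis using lin_acyclic[OF d] by (simp add: Acyc_def)
qed

lemma linext:
  fixes r :: "('a \<times> 'a) set"
  assumes "finite S" "finite r" "acyclic r"
  shows "\<exists>l. distinct l \<and> set l = S \<and> r \<inter> (S \<times> S) \<subseteq> lin_orient l"
  using assms(1)
proof (induction "card S" arbitrary: S)
  case 0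
  then have "S = {}" by simp
  then show ?case by (intro exI[of _ "[]"]) auto
next
  case (Suc n)
  have "wf r" using assms by (simp add: finite_acyclic_wf)
  have "S \<noteq> {}" using Suc.hyps(2) by auto
  then obtain m where mS: "m \<in> S" and mmin: "\<And>a. (a,m) \<in> r \<Longrightarrow> a \<notin> S"
    using wfE_min[OF \<open>wf r\<close>, of _ S] by blast
  have "card (S - {m}) = n" using Suc.hyps(2) mS by simp
  then obtain l where l: "distinct l" "set l = S - {m}" "r \<inter> ((S-{m}) \<times> (S-{m})) \<subseteq> lin_orient l"
    using Suc.hyps(1)[of "S - {m}"] Suc.prems by auto
  have "r \<inter> (S \<times> S) \<subseteq> lin_orient (m#l)"
  proof
    fix p assume p: "p \<in> r \<inter> (S \<times> S)"
    obtain a b where ab: "p = (a,b)" by (cases p)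
    have "b \<noteq> m" using mmin p ab by blast
    show "p \<in> lin_orient (m#l)"
    proof (cases "a = m")
      case True
      then show ?thesis using ab p \<open>b \<noteq> m\<close> l(2) by (auto simp: lin_cons)
    next
      case False
      then have "p \<in> lin_orient l" using l(3) p ab \<open>b \<noteq> m\<close> by auto
      then show ?thesis by (auto simp: lin_cons)
    qed
  qed
  then show ?case using l mS by (intro exI[of _ "m#l"]) auto
qed

lemma lin_rotate1:
  assumes d: "distinct v" and s: "set v = UNIV"
  shows "(lin_orient v, lin_orient (rotate1 v)) \<in> flip_rel complete_graph"
proof -
  obtain h t where v: "v = h#t" using s by (cases v) auto
  have ht: "h \<notin> set t" using d v by auto
  have l1: "lin_orient v = {(h,y)|y. y \<in> set t} \<union> lin_orient t" using v lin_cons by simp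
  have l2: "lin_orient (rotate1 v) = lin_orient t \<union> set t \<times> {h}"
    using v lin_append[of t "[h]"] by (simp add: lin_cons lin_nil)
  have lt: "lin_orient t \<subseteq> set t \<times> set t" by (rule lin_sub)
  have src: "is_source (lin_orient v) h"
    unfolding is_source_def l1 using lt ht by auto
  have "flip_at (lin_orient v) h = lin_orient (rotate1 v)"
  proof (rule set_eqI)
    fix p :: "'a \<times> 'a"
    obtain a b where p: "p = (a,b)" by (cases p)
    show "p \<in> flip_at (lin_orient v) h \<longleftrightarrow> p \<in> lin_orient (rotate1 v)"
      unfolding p flip_at_mem l1 l2 using lt ht by auto
  qed
  moreover have "lin_orient v \<in> Acyc complete_graph" by (rule lin_Acyc_K[OF d s])
  ultimately show ?thesis using src unfolding flip_rel_def by blast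
qed

lemma lin_rotate:
  assumes d: "distinct v" and s: "set v = UNIV"
  shows "lin_orient (rotate k v) \<in> toric_class complete_graph (lin_orient v)"
proof (induction k)
  case 0 then show ?case by (simp add: class_refl)
next
  case (Suc k)
  have "(lin_orient (rotate k v), lin_orient (rotate1 (rotate k v))) \<in> flip_rel complete_graph"
    by (rule lin_rotate1) (use d s in auto)
  then have "lin_orient (rotate (Suc k) v) \<in> toric_class complete_graph (lin_orient (rotate k v))"
    unfolding toric_class_def rotate_Suc by (intro CollectI r_into_rtrancl UnI1)
  then show ?case using Suc.IH class_trans by metis
qed

definition restr :: "'a set set \<Rightarrow> ('a \<times> 'a) set \<Rightarrow> ('a \<times> 'a) set" where
  "restr E t = {(i,j) \<in> t. {i,j} \<in> E}"

lemma restr_mem: "(a,b) \<in> restr E t \<longleftrightarrow> (a,b) \<in> t \<and> {a,b} \<in> E"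
  unfolding restr_def by auto

lemma simple_ne: "simple_graph E \<Longrightarrow> {i,j} \<in> E \<Longrightarrow> i \<noteq> j"
  unfolding simple_graph_def by fastforce

lemma simple_K: "simple_graph E \<Longrightarrow> {i,j} \<in> E \<Longrightarrow> {i,j} \<in> complete_graph"
  using simple_ne complete_graph_mem by metis

lemma restr_Acyc:
  assumes s: "simple_graph E" and t: "t \<in> Acyc complete_graph"
  shows "restr E t \<in> Acyc E"
proof -
  have o2: "\<And>i j. {i,j} \<in> complete_graph \<Longrightarrow> ((i,j) \<in> t \<longleftrightarrow> (j,i) \<notin> t)"
    using t unfolding Acyc_def orientation_def by blast
  have sw: "{a,b} = {b,a}" for a b :: 'a by blast
  have "orientation E (restr E t)"
    unfolding orientation_def
  proof (intro conjI allI impI subsetI)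
    fix p assume "p \<in> restr E t"
    then show "p \<in> {(i,j). {i,j} \<in> E}" unfolding restr_def by auto
  next
    fix i j assume e: "{i,j} \<in> E"
    have "{j,i} \<in> E" using e sw by metis
    then show "((i,j) \<in> restr E t) = ((j,i) \<notin> restr E t)"
      using e o2[OF simple_K[OF s e]] restr_mem[of i j E t] restr_mem[of j i E t] by blast
  qed
  moreover have "acyclic (restr E t)"
    using t acyclic_subset[of t "restr E t"] unfolding Acyc_def restr_def by blast
  ultimately show ?thesis by (simp add: Acyc_def)
qed

lemma restr_flip: "restr E (flip_at t m) = flip_at (restr E t) m"
proof (rule set_eqI)
  fix p :: "'a \<times> 'a"
  obtain a b where p: "p = (a,b)" by (cases p)
  have sw: "{a,b} = {b,a}" by blast
  show "p \<in> restr E (flip_at t m) \<longleftrightarrow> p \<in> flip_at (restr E t) m"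
    unfolding p restr_mem flip_at_mem using sw by auto
qed

lemma restr_source: "is_source t m \<Longrightarrow> is_source (restr E t) m"
  unfolding is_source_def restr_def by auto

lemma restr_rel:
  assumes s: "simple_graph E" and "(t, t') \<in> flip_rel complete_graph"
  shows "(restr E t, restr E t') \<in> flip_rel E"
proof -
  obtain i where "t' = flip_at t i" "t \<in> Acyc complete_graph" "is_source t i"
    using flip_relD0[OF assms(2)] by blast
  then show ?thesis unfolding flip_rel_def
    using restr_flip[of E t i] restr_Acyc[OF s] restr_source[of t i E] by blast
qed

lemma restr_class:
  assumes s: "simple_graph E" and "t' \<in> toric_class complete_graph t"
  shows "restr E t' \<in> toric_class E (restr E t)"
proof -
  have "(t, t') \<in> (flip_rel complete_graph \<union> (flip_rel complete_graph)\<inverse>)\<^sup>*"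
    using assms(2) unfolding toric_class_def by (rule CollectD)
  then have "(restr E t, restr E t') \<in> (flip_rel E \<union> (flip_rel E)\<inverse>)\<^sup>*"
  proof (induction rule: rtrancl_induct)
    case base then show ?case by (rule rtrancl_refl)
  next
    case (step y z)
    then have "(y,z) \<in> flip_rel complete_graph \<or> (z,y) \<in> flip_rel complete_graph" by blast
    then have "(restr E y, restr E z) \<in> flip_rel E \<union> (flip_rel E)\<inverse>"
      using restr_rel[OF s, of y z] restr_rel[OF s, of z y] by blast
    then show ?case using step.IH by (rule rtrancl_into_rtrancl[rotated])
  qed
  then show ?thesis unfolding toric_class_def by (rule CollectI)
qed

lemma orient_restr: assumes s: "simple_graph E" shows "orient_of E x = restr E (orient_of complete_graph x)"
  unfolding orient_of_def restr_def using simple_K[OF s] by auto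

lemma off_restr: assumes s: "simple_graph E" shows "off_arrangement complete_graph x \<Longrightarrow> off_arrangement E x"
  unfolding off_arrangement_def using simple_K[OF s] by blast

lemma chamber_mono:
  "r' \<in> toric_class E r \<Longrightarrow> toric_chamber E r' \<subseteq> toric_chamber E r"
  unfolding toric_chamber_def using class_trans by blast

lemma T4:
  fixes r :: "('a::finite \<times> 'a) set"
  assumes s: "simple_graph E" and r: "r \<in> Acyc E" and I: "order_ideal r I"
  shows "\<exists>w. total_toric_extension E r w \<and> cyclically_consecutive w I"
proof -
  have ac: "acyclic r" and o: "orientation E r" using r by (auto simp: Acyc_def)
  have ei: "edge_ideal r I" using I order_ideal_iff by blast
  obtain l1 where l1: "distinct l1" "set l1 = I" "r \<inter> (I \<times> I) \<subseteq> lin_orient l1"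
    using linext[of I r] ac by auto
  obtain l2 where l2: "distinct l2" "set l2 = -I" "r \<inter> ((-I) \<times> (-I)) \<subseteq> lin_orient l2"
    using linext[of "-I" r] ac by auto
  define w where "w = l1 @ l2"
  have dw: "distinct w" unfolding w_def using l1 l2 by auto
  have sw: "set w = UNIV" unfolding w_def using l1 l2 by auto
  have sub: "r \<subseteq> lin_orient w"
  proof
    fix p assume p: "p \<in> r"
    obtain a b where ab: "p = (a,b)" by (cases p)
    show "p \<in> lin_orient w"
    proof (cases "a \<in> I")
      case True
      then show ?thesis using l1 l2 p ab unfolding w_def lin_append by (cases "b \<in> I") auto
    next
      case False
      then have "b \<notin> I" using ei p ab unfolding edge_ideal_def by blast
      then show ?thesis using False l2 p ab unfolding w_def lin_append by auto
    qed
  qed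
  have rw: "restr E (lin_orient w) = r"
  proof (rule set_eqI)
    fix p :: "'a \<times> 'a"
    obtain a b where p: "p = (a,b)" by (cases p)
    have o1: "(a,b) \<in> r \<Longrightarrow> {a,b} \<in> E" and o2: "{a,b} \<in> E \<Longrightarrow> ((a,b) \<in> r \<longleftrightarrow> (b,a) \<notin> r)"
      using o unfolding orientation_def by blast+
    have as: "(a,b) \<in> lin_orient w \<Longrightarrow> (b,a) \<notin> lin_orient w"
      using acyc_antisym[OF lin_acyclic[OF dw]] by blast
    show "p \<in> restr E (lin_orient w) \<longleftrightarrow> p \<in> r"
      unfolding p restr_mem using o1 o2 as sub by blast
  qed
  have "toric_chamber complete_graph (lin_orient w) \<subseteq> toric_chamber E r"
  proof
    fix x assume "x \<in> toric_chamber complete_graph (lin_orient w)"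
    then have x1: "off_arrangement complete_graph x"
      and x2: "orient_of complete_graph x \<in> toric_class complete_graph (lin_orient w)"
      unfolding toric_chamber_def by auto
    have "orient_of E x \<in> toric_class E r"
      using restr_class[OF s x2] rw orient_restr[OF s] by metis
    then show "x \<in> toric_chamber E r"
      unfolding toric_chamber_def using off_restr[OF s x1] by blast
  qed
  then have "total_toric_extension E r w"
    unfolding total_toric_extension_def using dw sw by blast
  moreover have "cyclically_consecutive w I"
  proof -
    have "length l1 = card I" using l1 distinct_card by metis
    then have "take (card I) (rotate 0 w) = l1" unfolding w_def by simp
    then show ?thesis unfolding cyclically_consecutive_def using l1(2) by metis
  qed
  ultimately show ?thesis by blast
qed

lemma take_pos:
  assumes d: "distinct v" and s: "set v = UNIV"
  shows "y \<in> set (take c v) \<longleftrightarrow> pos v y < c"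
proof
  assume "y \<in> set (take c v)"
  then obtain i where "i < length (take c v)" "take c v ! i = y" by (auto simp: in_set_conv_nth)
  then have "i < c" "i < length v" "v!i = y" by auto
  then show "pos v y < c" using pos_nth[OF d] by metis
next
  assume h: "pos v y < c"
  have "pos v y < length v" "v!(pos v y) = y" using pos_in[OF d] s by auto
  then have "take c v ! pos v y = y" "pos v y < length (take c v)" using h by auto
  then show "y \<in> set (take c v)" by (metis nth_mem)
qed

lemma T5:
  fixes r :: "('a::finite \<times> 'a) set"
  assumes t: "total_toric_extension E r w" and c: "cyclically_consecutive w I"
  shows "\<exists>r'\<in>toric_class E r. order_ideal r' I"
proof -
  have dw: "distinct w" and sw: "set w = UNIV"
    and ch: "toric_chamber complete_graph (lin_orient w) \<subseteq> toric_chamber E r"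
    using t unfolding total_toric_extension_def by auto
  obtain k where k: "set (take (card I) (rotate k w)) = I" using c unfolding cyclically_consecutive_def by blast
  define v where "v = rotate k w"
  have dv: "distinct v" and sv: "set v = UNIV" unfolding v_def using dw sw by auto
  define n where "n = length v"
  define x :: "real^'a" where "x = (\<chi> i. real (Suc (pos v i)) / real (Suc n))"
  have pl: "pos v i < n" for i using pos_in[OF dv] sv unfolding n_def by auto
  have xi: "x$i = real (Suc (pos v i)) / real (Suc n)" for i unfolding x_def by simp
  have fx: "frac (x$i) = x$i" for i
  proof -
    have "0 \<le> x$i" "x$i < 1" using pl[of i] unfolding xi by (auto simp: field_simps)
    then show ?thesis by (simp add: frac_eq)
  qed
  have lt: "x$i < x$j \<longleftrightarrow> pos v i < pos v j" for i j
    unfolding xi by (simp add: divide_simps)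
  have pinj: "pos v i = pos v j \<Longrightarrow> i = j" for i j
    using pos_in[OF dv] sv by (metis UNIV_I)
  have ok: "orient_of complete_graph x = lin_orient v"
  proof (rule set_eqI)
    fix p :: "'a \<times> 'a"
    obtain a b where p: "p = (a,b)" by (cases p)
    show "p \<in> orient_of complete_graph x \<longleftrightarrow> p \<in> lin_orient v"
      unfolding p orient_of_def lin_char[OF dv] using fx lt sv complete_graph_mem[of a b] by auto
  qed
  have offk: "off_arrangement complete_graph x"
    unfolding off_arrangement_def
  proof (intro allI impI)
    fix i j :: 'a assume "{i,j} \<in> complete_graph"
    then have "i \<noteq> j" by (simp add: complete_graph_mem)
    then have "pos v i \<noteq> pos v j" using pinj by blast
    then show "frac (x$i) \<noteq> frac (x$j)" using fx lt by (metis linorder_neq_iff)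
  qed
  have "lin_orient v \<in> toric_class complete_graph (lin_orient w)"
    unfolding v_def by (rule lin_rotate[OF dw sw])
  then have "x \<in> toric_chamber complete_graph (lin_orient w)"
    unfolding toric_chamber_def using offk ok by simp
  then have "x \<in> toric_chamber E r" using ch by blast
  then have cl: "orient_of E x \<in> toric_class E r" unfolding toric_chamber_def by blast
  have "edge_ideal (orient_of E x) I"
    unfolding edge_ideal_def
  proof (intro allI impI)
    fix a b assume ab: "(a,b) \<in> orient_of E x" "b \<in> I"
    then have "pos v a < pos v b" unfolding orient_of_def using fx lt by auto
    moreover have "pos v b < card I" using ab(2) k take_pos[OF dv sv] unfolding v_def by blast
    ultimately show "a \<in> I" using k take_pos[OF dv sv] unfolding v_def by (metis order.strict_trans)
  qed
  then show ?thesis using cl order_ideal_iff by blast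
qed

lemma T2:
  fixes r' :: "('a::finite \<times> 'a) set"
  assumes r': "r' \<in> Acyc E" and I: "order_ideal r' I" and ne: "I \<noteq> {}" "I \<noteq> UNIV"
  shows "\<exists>U. open U \<and> U \<inter> D_tor {I, -I} \<noteq> {} \<and> U \<inter> D_tor {I, -I} \<subseteq> closure (toric_chamber E r')"
proof -
  have ac: "acyclic r'" and o: "orientation E r'" using r' by (auto simp: Acyc_def)
  have o1: "\<And>a b. (a,b) \<in> r' \<Longrightarrow> {a,b} \<in> E" and o2: "\<And>i j. {i,j} \<in> E \<Longrightarrow> ((i,j) \<in> r' \<longleftrightarrow> (j,i) \<notin> r')"
    using o unfolding orientation_def by blast+
  have ei: "edge_ideal r' I" using I order_ideal_iff by blast
  define N where "N = real CARD('a)"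
  define h where "h i = real (card {j. (j,i) \<in> r'\<^sup>+})" for i
  have hmono: "h i < h j" if "(i,j) \<in> r'" for i j
  proof -
    have "{k. (k,i) \<in> r'\<^sup>+} \<subset> {k. (k,j) \<in> r'\<^sup>+}"
    proof
      show "{k. (k,i) \<in> r'\<^sup>+} \<subseteq> {k. (k,j) \<in> r'\<^sup>+}" using that by (auto intro: trancl_into_trancl)
      have "(i,i) \<notin> r'\<^sup>+" using ac unfolding acyclic_def by blast
      moreover have "(i,j) \<in> r'\<^sup>+" using that by blast
      ultimately show "{k. (k,i) \<in> r'\<^sup>+} \<noteq> {k. (k,j) \<in> r'\<^sup>+}" by blast
    qed
    then show ?thesis unfolding h_def by (simp add: psubset_card_mono)
  qed
  have hb: "0 \<le> h i \<and> h i \<le> N" for i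
    unfolding h_def N_def by (simp add: card_mono)
  define hv :: "real^'a" where "hv = (\<chi> i. h i)"
  define p :: "real^'a" where "p = (\<chi> i. if i \<in> I then 1/4 else 3/4)"
  let ?D = "D_tor {I, -I}"
  have pD: "p \<in> ?D" unfolding D_tor_def p_def by auto
  have main: "y \<in> closure (toric_chamber E r')" if y: "y \<in> ball p (1/8)" "y \<in> ?D" for y
  proof -
    have cy: "\<bar>y$i - p$i\<bar> < 1/8" for i
    proof -
      have "\<bar>(p - y)$i\<bar> \<le> norm (p - y)" by (rule component_le_norm_cart)
      then show ?thesis using y(1) by (simp add: dist_norm abs_minus_commute)
    qed
    have yI: "y$i \<in> {1/8<..<3/8}" if "i \<in> I" for i
    proof -
      have "\<bar>y$i - 1/4\<bar> < 1/8" using cy[of i] that unfolding p_def by simp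
      then show ?thesis unfolding abs_less_iff greaterThanLessThan_iff by linarith
    qed
    have yJ: "y$i \<in> {5/8<..<7/8}" if "i \<notin> I" for i
    proof -
      have "\<bar>y$i - 3/4\<bar> < 1/8" using cy[of i] that unfolding p_def by simp
      then show ?thesis unfolding abs_less_iff greaterThanLessThan_iff by linarith
    qed
    have same: "y$i = y$j" if "(i \<in> I) = (j \<in> I)" for i j
    proof -
      have "y$i - y$j \<in> \<int>"
      proof (cases "i \<in> I")
        case True then show ?thesis using y(2) that unfolding D_tor_def by auto
      next
        case False then show ?thesis using y(2) that unfolding D_tor_def by auto
      qed
      moreover have "\<bar>y$i - y$j\<bar> < 1"
        using yI[of i] yI[of j] yJ[of i] yJ[of j] that by (cases "i \<in> I") auto
      ultimately show ?thesis using Ints_nonzero_abs_less1 by fastforce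
    qed
    show ?thesis unfolding closure_approachable
    proof (intro allI impI)
      fix e :: real assume e: "e > 0"
      define \<epsilon> where "\<epsilon> = min (e / (norm hv + 1)) (1 / (16 * (N + 1)))"
      have N0: "N \<ge> 0" unfolding N_def by simp
      have \<epsilon>0: "\<epsilon> > 0" unfolding \<epsilon>_def using e N0 by (simp add: add_nonneg_pos)
      have \<epsilon>h: "\<epsilon> * h i < 1/16" for i
      proof -
        have "\<epsilon> * h i \<le> (1 / (16 * (N + 1))) * N"
          using hb[of i] \<epsilon>0 unfolding \<epsilon>_def by (intro mult_mono) auto
        also have "\<dots> < 1/16" using N0 by (simp add: field_simps)
        finally show ?thesis .
      qed
      have \<epsilon>h0: "0 \<le> \<epsilon> * h i" for i using hb[of i] \<epsilon>0 by simp
      define z where "z = y + \<epsilon> *\<^sub>R hv"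
      have zi: "z$i = y$i + \<epsilon> * h i" for i unfolding z_def hv_def by simp
      have dz: "dist z y < e"
      proof -
        have "dist z y = \<epsilon> * norm hv" unfolding z_def dist_norm using \<epsilon>0 by simp
        also have "\<dots> \<le> e / (norm hv + 1) * norm hv" unfolding \<epsilon>_def by (intro mult_right_mono) auto
        also have "\<dots> < e"
        proof -
          have n0: "norm hv + 1 > 0" by (simp add: add_nonneg_pos)
          have "e * norm hv < e * (norm hv + 1)" using e by simp
          then show ?thesis using n0 by (simp add: pos_divide_less_eq)
        qed
        finally show ?thesis .
      qed
      have fz: "frac (z$i) = z$i" for i
      proof -
        have "0 \<le> z$i \<and> z$i < 1"
          using yI[of i] yJ[of i] \<epsilon>h[of i] \<epsilon>h0[of i] unfolding zi by (cases "i \<in> I") auto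
        then show ?thesis by (simp add: frac_eq)
      qed
      have key: "z$i < z$j" if "(i,j) \<in> r'" for i j
      proof (cases "i \<in> I")
        case True
        show ?thesis
        proof (cases "j \<in> I")
          case True
          then have "y$i = y$j" using same \<open>i \<in> I\<close> by blast
          then show ?thesis unfolding zi using hmono[OF that] \<epsilon>0 by simp
        next
          case False
          then show ?thesis unfolding zi using yI[of i] yJ[of j] \<epsilon>h[of i] \<epsilon>h0[of j] \<open>i \<in> I\<close> by auto
        qed
      next
        case False
        then have "j \<notin> I" using ei that unfolding edge_ideal_def by blast
        then have "y$i = y$j" using same False by blast
        then show ?thesis unfolding zi using hmono[OF that] \<epsilon>0 by simp
      qed
      have oz: "orient_of E z = r'"
      proof (rule set_eqI)
        fix q :: "'a \<times> 'a"
        obtain a b where q: "q = (a,b)" by (cases q)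
        show "q \<in> orient_of E z \<longleftrightarrow> q \<in> r'"
        proof
          assume "q \<in> orient_of E z"
          then have ab: "{a,b} \<in> E" "z$a < z$b" unfolding q orient_of_def using fz by auto
          show "q \<in> r'"
          proof (rule ccontr)
            assume "q \<notin> r'"
            then have "(b,a) \<in> r'" using o2[OF ab(1)] q by blast
            then show False using key ab(2) by fastforce
          qed
        next
          assume "q \<in> r'"
          then show "q \<in> orient_of E z" unfolding q orient_of_def using fz key o1 by auto
        qed
      qed
      have offz: "off_arrangement E z" unfolding off_arrangement_def
      proof (intro allI impI)
        fix i j assume e: "{i,j} \<in> E"
        then have "(i,j) \<in> r' \<or> (j,i) \<in> r'" using o2 by blast
        then show "frac (z$i) \<noteq> frac (z$j)" using key fz by (metis less_irrefl)
      qed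
      have "z \<in> toric_chamber E r'" unfolding toric_chamber_def using oz offz class_refl by auto
      then show "\<exists>x\<in>toric_chamber E r'. dist x y < e" using dz by blast
    qed
  qed
  have "p \<in> ball p (1/8) \<inter> ?D" using pD by simp
  then have "ball p (1/8) \<inter> ?D \<noteq> {}" by blast
  moreover have "ball p (1/8) \<inter> ?D \<subseteq> closure (toric_chamber E r')" using main by blast
  ultimately show ?thesis using open_ball by blast
qed

lemma nonint: "(x::real) \<in> \<int> \<Longrightarrow> y \<in> \<int> \<Longrightarrow> 0 < y - x \<Longrightarrow> y - x < 1 \<Longrightarrow> False"
  using Ints_nonzero_abs_less1[of "y - x"] Ints_diff[of y x] by auto

lemma choose2:
  fixes u d :: real assumes "0 < d" "d < 1"
  shows "\<exists>s. (s = d \<or> s = 2*d) \<and> u + s \<notin> \<int>"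
  using nonint[of "u+d" "u+2*d"] assms by force

lemma choose3:
  fixes u v d :: real assumes "0 < d" "2*d < 1"
  shows "\<exists>t. (t = d \<or> t = 2*d \<or> t = 3*d) \<and> u + t \<notin> \<int> \<and> v + t \<notin> \<int>"
proof (rule ccontr)
  assume "\<not> ?thesis"
  then have h1: "u + d \<in> \<int> \<or> v + d \<in> \<int>" and h2: "u + 2*d \<in> \<int> \<or> v + 2*d \<in> \<int>"
    and h3: "u + 3*d \<in> \<int> \<or> v + 3*d \<in> \<int>" by auto
  have a1: "\<not> (w + d \<in> \<int> \<and> w + 2*d \<in> \<int>)" for w
    using nonint[of "w+d" "w+2*d"] assms by auto
  have a2: "\<not> (w + 2*d \<in> \<int> \<and> w + 3*d \<in> \<int>)" for w
    using nonint[of "w+2*d" "w+3*d"] assms by auto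
  have a3: "\<not> (w + d \<in> \<int> \<and> w + 3*d \<in> \<int>)" for w
    using nonint[of "w+d" "w+3*d"] assms by auto
  show False using h1 h2 h3 a1[of u] a1[of v] a2[of u] a2[of v] a3[of u] a3[of v] by blast
qed

lemma frac_eq_diff: "frac (x::real) = frac y \<Longrightarrow> x - y \<in> \<int>"
proof -
  assume h: "frac x = frac y"
  have "x - y = of_int (\<lfloor>x\<rfloor> - \<lfloor>y\<rfloor>)" using h unfolding frac_def by simp
  then show ?thesis by (metis Ints_of_int)
qed

lemma fracnear:
  fixes y z \<alpha> \<gamma> :: real
  assumes "frac y = \<alpha>" "\<gamma> < \<alpha>" "\<alpha> + \<gamma> < 1" "\<bar>z - y\<bar> < \<gamma>"
  shows "\<bar>frac z - \<alpha>\<bar> < \<gamma>"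
proof -
  define k where "k = \<lfloor>y\<rfloor>"
  have y: "y = of_int k + \<alpha>" using assms(1) unfolding k_def frac_def by simp
  have "of_int k \<le> z" "z < of_int k + 1" using assms y by (auto simp: abs_less_iff)
  then have "\<lfloor>z\<rfloor> = k" by (rule floor_unique)
  then have "frac z = z - of_int k" unfolding frac_def by simp
  then show ?thesis using assms(4) y by simp
qed

lemma T1:
  fixes r :: "('a::finite \<times> 'a) set"
  assumes r: "r \<in> Acyc E" and ne: "I \<noteq> {}" "I \<noteq> UNIV" and U: "open U"
    and y0: "y0 \<in> U \<inter> D_tor {I, -I}" and sub: "U \<inter> D_tor {I, -I} \<subseteq> closure (toric_chamber E r)"
  shows "\<exists>r'\<in>toric_class E r. order_ideal r' I"
proof -
  let ?D = "D_tor {I, -I}"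
  obtain \<delta> where \<delta>: "\<delta> > 0" "ball y0 \<delta> \<subseteq> U" using U y0 open_contains_ball by blast
  obtain i0 where i0: "i0 \<in> I" using ne by blast
  obtain j0 where j0: "j0 \<notin> I" using ne by blast
  define N where "N = real CARD('a)"
  have N1: "N \<ge> 1" unfolding N_def by simp
  define c where "c = min (1/4) (\<delta> / (2 * N))"
  have c0: "c > 0" unfolding c_def using \<delta> N1 by simp
  define d where "d = c / 4"
  have d0: "0 < d" "2 * d < 1" "d < 1" unfolding d_def using c0 by (auto simp: c_def)
  define a where "a = y0$i0"
  define b where "b = y0$j0"
  obtain s where s: "s = d \<or> s = 2*d" "a + s \<notin> \<int>" using choose2[OF d0(1) d0(3)] by blast
  obtain t where t: "t = d \<or> t = 2*d \<or> t = 3*d" "b + t \<notin> \<int>" "(b - (a + s)) + t \<notin> \<int>"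
    using choose3[OF d0(1) d0(2), of b "b - (a + s)"] by blast
  define q :: "real^'a" where "q = (\<chi> i. if i \<in> I then s else t)"
  define y where "y = y0 + q"
  have yi: "y$i = y0$i + (if i \<in> I then s else t)" for i unfolding y_def q_def by simp
  have qb: "\<bar>q$i\<bar> \<le> c" for i using s(1) t(1) c0 unfolding q_def d_def by auto
  have "norm q \<le> (\<Sum>i\<in>UNIV. \<bar>q$i\<bar>)" by (rule norm_le_l1_cart)
  also have "\<dots> \<le> of_nat (card (UNIV::'a set)) * c" by (rule sum_bounded_above) (use qb in auto)
  also have "\<dots> = N * c" unfolding N_def by simp
  also have "\<dots> \<le> N * (\<delta> / (2 * N))" unfolding c_def using N1 by (intro mult_left_mono) auto
  also have "\<dots> < \<delta>" using N1 \<delta>(1) by simp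
  finally have "norm q < \<delta>" .
  moreover have "dist y0 y = norm q" unfolding y_def dist_norm by (simp add: norm_minus_commute)
  ultimately have yb: "y \<in> ball y0 \<delta>" by (simp add: dist_commute)
  have "y \<in> U" using \<delta>(2) yb by (rule subsetD)
  moreover
  have y0D0: "y0 \<in> ?D" using y0 by (rule IntD2)
  have y0I: "\<forall>i\<in>I. \<forall>j\<in>I. y0$i - y0$j \<in> \<int>" using y0D0 unfolding D_tor_def by simp
  have y0J: "\<forall>i\<in>-I. \<forall>j\<in>-I. y0$i - y0$j \<in> \<int>" using y0D0 unfolding D_tor_def by simp
  have y0D: "y0$i - y0$j \<in> \<int>" if "(i \<in> I) = (j \<in> I)" for i j
  proof (cases "i \<in> I")
    case True then show ?thesis using y0I that by blast
  next
    case False then show ?thesis using y0J that by blast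
  qed
  have yD: "y$i - y$j \<in> \<int>" if "(i \<in> I) = (j \<in> I)" for i j
  proof -
    have "y$i - y$j = y0$i - y0$j" unfolding yi using that by auto
    then show ?thesis using y0D[OF that] by simp
  qed
  have "y \<in> ?D" unfolding D_tor_def
  proof (intro CollectI ballI)
    fix B i j assume "B \<in> {I, -I}" "i \<in> B" "j \<in> B"
    then have "(i \<in> I) = (j \<in> I)" by auto
    then show "y$i - y$j \<in> \<int>" by (rule yD)
  qed
  ultimately have ycl: "y \<in> closure (toric_chamber E r)" using sub by blast
  define \<alpha> where "\<alpha> = frac (a + s)"
  define \<beta> where "\<beta> = frac (b + t)"
  have \<alpha>01: "0 < \<alpha>" "\<alpha> < 1" unfolding \<alpha>_def using s(2) frac_lt_1 by auto
  have \<beta>01: "0 < \<beta>" "\<beta> < 1" unfolding \<beta>_def using t(2) frac_lt_1 by auto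
  have \<alpha>\<beta>: "\<alpha> \<noteq> \<beta>"
  proof
    assume "\<alpha> = \<beta>"
    then have "(b + t) - (a + s) \<in> \<int>" unfolding \<alpha>_def \<beta>_def using frac_eq_diff by metis
    then show False using t(3) by (simp add: algebra_simps)
  qed
  have fyI: "frac (y$i) = \<alpha>" if "i \<in> I" for i
  proof -
    have "y$i = (a + s) + (y0$i - y0$i0)" unfolding yi a_def using that by simp
    moreover have "y0$i - y0$i0 \<in> \<int>" using y0D that i0 by blast
    ultimately show ?thesis unfolding \<alpha>_def by (simp add: frac_add_int_right)
  qed
  have fyJ: "frac (y$i) = \<beta>" if "i \<notin> I" for i
  proof -
    have "y$i = (b + t) + (y0$i - y0$j0)" unfolding yi b_def using that by simp
    moreover have "y0$i - y0$j0 \<in> \<int>" using y0D that j0 by blast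
    ultimately show ?thesis unfolding \<beta>_def by (simp add: frac_add_int_right)
  qed
  define \<gamma> where "\<gamma> = min (min (min \<alpha> (1-\<alpha>)) (min \<beta> (1-\<beta>))) \<bar>\<alpha> - \<beta>\<bar> / 3"
  have \<gamma>0: "\<gamma> > 0" unfolding \<gamma>_def using \<alpha>01 \<beta>01 \<alpha>\<beta> by auto
  have g1: "3*\<gamma> \<le> \<alpha>" "3*\<gamma> \<le> 1-\<alpha>" "3*\<gamma> \<le> \<beta>" "3*\<gamma> \<le> 1-\<beta>" "3*\<gamma> \<le> \<bar>\<alpha>-\<beta>\<bar>"
    unfolding \<gamma>_def by auto
  have \<gamma>1: "\<gamma> < \<alpha>" "\<alpha> + \<gamma> < 1" "\<gamma> < \<beta>" "\<beta> + \<gamma> < 1" "3 * \<gamma> \<le> \<bar>\<alpha> - \<beta>\<bar>"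
    using g1 \<gamma>0 by linarith+
  obtain z where z: "z \<in> toric_chamber E r" "dist z y < \<gamma>"
    using ycl \<gamma>0 unfolding closure_approachable by blast
  have zc: "\<bar>z$i - y$i\<bar> < \<gamma>" for i
  proof -
    have "\<bar>(z - y)$i\<bar> \<le> norm (z - y)" by (rule component_le_norm_cart)
    then show ?thesis using z(2) by (simp add: dist_norm)
  qed
  have fzI: "\<bar>frac (z$i) - \<alpha>\<bar> < \<gamma>" if "i \<in> I" for i
    using fracnear[OF fyI[OF that] \<gamma>1(1) \<gamma>1(2) zc[of i]] .
  have fzJ: "\<bar>frac (z$i) - \<beta>\<bar> < \<gamma>" if "i \<notin> I" for i
    using fracnear[OF fyJ[OF that] \<gamma>1(3) \<gamma>1(4) zc[of i]] .
  define r'' where "r'' = orient_of E z"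
  have cl: "r'' \<in> toric_class E r" using z(1) unfolding toric_chamber_def r''_def by blast
  have r''A: "r'' \<in> Acyc E" by (rule class_Acyc[OF r cl])
  have lt: "frac (z$a') < frac (z$b')" if "(a',b') \<in> r''" for a' b'
    using that unfolding r''_def orient_of_def by auto
  show ?thesis
  proof (cases "\<alpha> < \<beta>")
    case True
    have "edge_ideal r'' I" unfolding edge_ideal_def
    proof (intro allI impI)
      fix a' b' assume ab: "(a',b') \<in> r''" "b' \<in> I"
      show "a' \<in> I"
      proof (rule ccontr)
        assume "a' \<notin> I"
        then show False using fzJ[of a'] fzI[OF ab(2)] lt[OF ab(1)] \<gamma>1(5) True
          by (auto simp: abs_less_iff)
      qed
    qed
    then show ?thesis using cl order_ideal_iff by blast
  next
    case False
    then have ba: "\<beta> < \<alpha>" using \<alpha>\<beta> by auto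
    have "edge_ideal r'' (-I)" unfolding edge_ideal_def
    proof (intro allI impI)
      fix a' b' assume ab: "(a',b') \<in> r''" "b' \<in> -I"
      show "a' \<in> -I"
      proof (rule ccontr)
        assume "a' \<notin> -I"
        then show False using fzI[of a'] fzJ[of b'] ab(2) lt[OF ab(1)] \<gamma>1(5) ba
          by (auto simp: abs_less_iff)
      qed
    qed
    then have "order_filter r'' I" using order_filter_iff by blast
    then obtain r3 where "r3 \<in> toric_class E r''" "order_ideal r3 I"
      using filter_to_ideal[OF r''A] by blast
    then show ?thesis using cl class_trans by blast
  qed
qed

theorem mainTheorem12:
  fixes E :: "('a::finite) set set" and \<omega> :: "('a \<times> 'a) set" and I :: "'a set"
  assumes "simple_graph E" and "\<omega> \<in> Acyc E"
  shows "(toric_filter E \<omega> I \<longleftrightarrow> (\<exists>\<omega>'\<in>toric_class E \<omega>. order_ideal \<omega>' I)) \<and>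
         (toric_filter E \<omega> I \<longleftrightarrow> (\<exists>\<omega>''\<in>toric_class E \<omega>. order_filter \<omega>'' I)) \<and>
         (toric_filter E \<omega> I \<longleftrightarrow>
            (\<exists>w. total_toric_extension E \<omega> w \<and> cyclically_consecutive w I))"
proof -
  note s = assms(1) and r = assms(2)
  let ?ii = "\<exists>\<omega>'\<in>toric_class E \<omega>. order_ideal \<omega>' I"
  let ?iii = "\<exists>\<omega>''\<in>toric_class E \<omega>. order_filter \<omega>'' I"
  let ?iv = "\<exists>w. total_toric_extension E \<omega> w \<and> cyclically_consecutive w I"
  have i_ii: "toric_filter E \<omega> I \<longleftrightarrow> ?ii"
  proof
    assume tf: "toric_filter E \<omega> I"
    show ?ii
    proof (cases "I = {} \<or> I = UNIV")
      case True
      then have "order_ideal \<omega> I" unfolding order_ideal_def by auto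
      then show ?thesis using class_refl by blast
    next
      case False
      then obtain U where "open U" "U \<inter> D_tor {I, -I} \<noteq> {}"
        "U \<inter> D_tor {I, -I} \<subseteq> closure (toric_chamber E \<omega>)"
        using tf unfolding toric_filter_def by blast
      then obtain y0 where "y0 \<in> U \<inter> D_tor {I, -I}" by blast
      then show ?thesis using T1[OF r _ _ \<open>open U\<close> _ \<open>U \<inter> D_tor {I, -I} \<subseteq> _\<close>] False by blast
    qed
  next
    assume ii: ?ii
    show "toric_filter E \<omega> I"
    proof (cases "I = {} \<or> I = UNIV")
      case True
      then show ?thesis unfolding toric_filter_def by blast
    next
      case False
      obtain \<omega>' where w': "\<omega>' \<in> toric_class E \<omega>" "order_ideal \<omega>' I" using ii by blast
      have "\<omega>' \<in> Acyc E" by (rule class_Acyc[OF r w'(1)])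
      then obtain U where U: "open U" "U \<inter> D_tor {I, -I} \<noteq> {}"
        "U \<inter> D_tor {I, -I} \<subseteq> closure (toric_chamber E \<omega>')"
        using T2[OF _ w'(2)] False by blast
      have "closure (toric_chamber E \<omega>') \<subseteq> closure (toric_chamber E \<omega>)"
        by (rule closure_mono[OF chamber_mono[OF w'(1)]])
      then show ?thesis using U False unfolding toric_filter_def by blast
    qed
  qed
  have ii_iii: "?ii \<longleftrightarrow> ?iii"
  proof
    assume ?ii
    then obtain \<omega>' where w': "\<omega>' \<in> toric_class E \<omega>" "order_ideal \<omega>' I" by blast
    then obtain \<omega>'' where "\<omega>'' \<in> toric_class E \<omega>'" "order_filter \<omega>'' I"
      using ideal_to_filter[OF class_Acyc[OF r w'(1)]] by blast
    then show ?iii using w'(1) class_trans by blast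
  next
    assume ?iii
    then obtain \<omega>' where w': "\<omega>' \<in> toric_class E \<omega>" "order_filter \<omega>' I" by blast
    then obtain \<omega>'' where "\<omega>'' \<in> toric_class E \<omega>'" "order_ideal \<omega>'' I"
      using filter_to_ideal[OF class_Acyc[OF r w'(1)]] by blast
    then show ?ii using w'(1) class_trans by blast
  qed
  have ii_iv: "?ii \<longleftrightarrow> ?iv"
  proof
    assume ?ii
    then obtain \<omega>' where w': "\<omega>' \<in> toric_class E \<omega>" "order_ideal \<omega>' I" by blast
    obtain w where w: "total_toric_extension E \<omega>' w" "cyclically_consecutive w I"
      using T4[OF s class_Acyc[OF r w'(1)] w'(2)] by blast
    have "total_toric_extension E \<omega> w"
      using w(1) chamber_mono[OF w'(1)] unfolding total_toric_extension_def by blast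
    then show ?iv using w(2) by blast
  next
    assume ?iv
    then obtain w where "total_toric_extension E \<omega> w" "cyclically_consecutive w I" by blast
    then show ?ii using T5 by blast
  qed
  show ?thesis using i_ii ii_iii ii_iv by blast
qed

end
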